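(* Let $n,m\geq1$, let $a_1\geq\cdots\geq a_n$ and $b_1\geq\cdots\geq b_m$ be nonnegative integers, let $0\leq k\leq\nu\leq\min\{n,m\}$ be integers, and let $N=N(d_A,d_B,\nu,k)$. Then some $s$-$t$-cut of minimum capacity in $N$ is clean.
   Context: Network definition: for nonnegative integers $a_1\geq\cdots\geq a_n$, $b_1\geq\cdots\geq b_m$ and integers $0\leq k\leq\nu\leq\min\{n,m\}$, $N(d_A,d_B,\nu,k)=(D,c)$ where $D$ is the digraph with vertex set $\{s,t,v_1,\ldots,v_n,w_1,\ldots,w_m\}$ and arcs: $(s,v_i)$ for all $i\in[n]$; $(w_j,t)$ for all $j\in[m]$; and $(v_i,w_j)$ for all $(i,j)\in[n]\times[m]$ such that ($i\leq k$ or $j\leq \nu-k$) and $i+j\neq \nu+1$. The capacity $c$ is: $c((s,v_i))=a_i-1$ for $i\in[k]$ and $a_i$ for $i\in[n]\setminus[k]$; $c((w_j,t))=b_j-1$ for $j\in[\nu-k]$ and $b_j$ for $j\in[m]\setminus[\nu-k]$; and $c((v_i,w_j))=1$ for every arc $(v_i,w_j)$. Here $[k]$ denotes $\{1,\ldots,k\}$. An $s$-$t$-cut generated by a vertex set $X$ with $s\in X$, $t\notin X$ is the set of arcs from $X$ to its complement; its capacity is the sum of their capacities. Write $X=\{s\}\cup S_1\cup S_2\cup T_1\cup T_2$ with $S_1\subseteq\{v_1,\ldots,v_k\}$, $S_2\subseteq\{v_{k+1},\ldots,v_n\}$, $T_1\subseteq\{w_1,\ldots,w_{\nu-k}\}$,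 $T_2\subseteq\{w_{\nu-k+1},\ldots,w_m\}$. The cut is clean if: (1) if $v_i\in S_1$ and $v_j\in\{v_1,\ldots,v_k\}\setminus S_1$ then $a_i\geq a_j$; (2) if $w_i\in T_1$ and $w_j\in\{w_1,\ldots,w_{\nu-k}\}\setminus T_1$ then $b_i\leq b_j$; (3) if $v_i\in S_2$ and $v_j\in\{v_{k+1},\ldots,v_n\}\setminus S_2$ then $a_i\geq a_j$; (4) if $w_i\in T_2$ and $w_j\in\{w_{\nu-k+1},\ldots,w_m\}\setminus T_2$ then $b_i\leq b_j$; (5) if $v_i\in S_1$, $v_j\in\{v_1,\ldots,v_k\}\setminus S_1$ and $a_i=a_j$, then $i>j$; (6) if $v_i\in S_2$, $v_j\in\{v_{k+1},\ldots,v_n\}\setminus S_2$ and $a_i=a_j$, then $i>j$. *)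

theory Defs
  imports Main
begin

datatype vert = Src | Snk | Vv nat | Ww nat

definition net_vertices :: "nat \<Rightarrow> nat \<Rightarrow> vert set" where
  "net_vertices n m = {Src, Snk} \<union> Vv ` {1..n} \<union> Ww ` {1..m}"

definition net_arcs :: "nat \<Rightarrow> nat \<Rightarrow> nat \<Rightarrow> nat \<Rightarrow> (vert \<times> vert) set" where
  "net_arcs n m \<nu> k =
     {(Src, Vv i) | i. i \<in> {1..n}}
   \<union> {(Ww j, Snk) | j. j \<in> {1..m}}
   \<union> {(Vv i, Ww j) | i j. i \<in> {1..n} \<and> j \<in> {1..m} \<and> (i \<le> k \<or> j \<le> \<nu> - k) \<and> i + j \<noteq> \<nu> + 1}"

text \<open>Capacity function (integer valued, since a_i - 1 may be negative when a_i = 0).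
  Its value off the arc set is irrelevant.\<close>
definition net_cap :: "(nat \<Rightarrow> nat) \<Rightarrow> (nat \<Rightarrow> nat) \<Rightarrow> nat \<Rightarrow> nat \<Rightarrow> vert \<times> vert \<Rightarrow> int" where
  "net_cap a b \<nu> k e =
     (case e of
        (Src, Vv i) \<Rightarrow> (if i \<le> k then int (a i) - 1 else int (a i))
      | (Ww j, Snk) \<Rightarrow> (if j \<le> \<nu> - k then int (b j) - 1 else int (b j))
      | _ \<Rightarrow> 1)"

definition is_st_cut :: "nat \<Rightarrow> nat \<Rightarrow> vert set \<Rightarrow> bool" where
  "is_st_cut n m X \<longleftrightarrow> Src \<in> X \<and> Snk \<notin> X \<and> X \<subseteq> net_vertices n m"

definition cut_capacity ::
  "nat \<Rightarrow> nat \<Rightarrow> (nat \<Rightarrow> nat) \<Rightarrow> (nat \<Rightarrow> nat) \<Rightarrow> nat \<Rightarrow> nat \<Rightarrow> vert set \<Rightarrow> int" where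
  "cut_capacity n m a b \<nu> k X =
     (\<Sum>e \<in> {e \<in> net_arcs n m \<nu> k. fst e \<in> X \<and> snd e \<notin> X}. net_cap a b \<nu> k e)"

definition is_min_cut ::
  "nat \<Rightarrow> nat \<Rightarrow> (nat \<Rightarrow> nat) \<Rightarrow> (nat \<Rightarrow> nat) \<Rightarrow> nat \<Rightarrow> nat \<Rightarrow> vert set \<Rightarrow> bool" where
  "is_min_cut n m a b \<nu> k X \<longleftrightarrow>
     is_st_cut n m X \<and>
     (\<forall>Y. is_st_cut n m Y \<longrightarrow> cut_capacity n m a b \<nu> k X \<le> cut_capacity n m a b \<nu> k Y)"

text \<open>Clean cuts, conditions (1)-(6), with S1 = X restricted to v_1..v_k,
  S2 = X restricted to v_{k+1}..v_n, T1 = X restricted to w_1..w_{nu-k},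
  T2 = X restricted to w_{nu-k+1}..w_m.\<close>
definition is_clean ::
  "nat \<Rightarrow> nat \<Rightarrow> (nat \<Rightarrow> nat) \<Rightarrow> (nat \<Rightarrow> nat) \<Rightarrow> nat \<Rightarrow> nat \<Rightarrow> vert set \<Rightarrow> bool" where
  "is_clean n m a b \<nu> k X \<longleftrightarrow>
     (\<forall>i \<in> {1..k}. \<forall>j \<in> {1..k}. Vv i \<in> X \<and> Vv j \<notin> X \<longrightarrow> a i \<ge> a j) \<and>
     (\<forall>i \<in> {1..\<nu>-k}. \<forall>j \<in> {1..\<nu>-k}. Ww i \<in> X \<and> Ww j \<notin> X \<longrightarrow> b i \<le> b j) \<and>
     (\<forall>i \<in> {k+1..n}. \<forall>j \<in> {k+1..n}. Vv i \<in> X \<and> Vv j \<notin> X \<longrightarrow> a i \<ge> a j) \<and>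
     (\<forall>i \<in> {\<nu>-k+1..m}. \<forall>j \<in> {\<nu>-k+1..m}. Ww i \<in> X \<and> Ww j \<notin> X \<longrightarrow> b i \<le> b j) \<and>
     (\<forall>i \<in> {1..k}. \<forall>j \<in> {1..k}. Vv i \<in> X \<and> Vv j \<notin> X \<and> a i = a j \<longrightarrow> i > j) \<and>
     (\<forall>i \<in> {k+1..n}. \<forall>j \<in> {k+1..n}. Vv i \<in> X \<and> Vv j \<notin> X \<and> a i = a j \<longrightarrow> i > j)"

end

theory Submission
  imports Defs
begin

locale NWK =
  fixes n m \<nu> k :: nat and a b :: "nat \<Rightarrow> nat"
  assumes amono: "\<And>i j. 1 \<le> i \<Longrightarrow> i \<le> j \<Longrightarrow> j \<le> n \<Longrightarrow> a j \<le> a i"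
    and bmono: "\<And>i j. 1 \<le> i \<Longrightarrow> i \<le> j \<Longrightarrow> j \<le> m \<Longrightarrow> b j \<le> b i"
    and kn: "k \<le> \<nu>" and nun: "\<nu> \<le> n" and num: "\<nu> \<le> m"
begin

definition E :: "nat \<Rightarrow> nat \<Rightarrow> bool" where
  "E x y \<longleftrightarrow> x \<in> {1..n} \<and> y \<in> {1..m} \<and> (x \<le> k \<or> y \<le> \<nu> - k) \<and> x + y \<noteq> \<nu> + 1"
definition cs :: "nat \<Rightarrow> int" where "cs x = (if x \<le> k then int (a x) - 1 else int (a x))"
definition ct :: "nat \<Rightarrow> int" where "ct y = (if y \<le> \<nu> - k then int (b y) - 1 else int (b y))"
definition F :: "nat set \<Rightarrow> nat set \<Rightarrow> int" where
  "F A B = (\<Sum>x\<in>{1..n} - A. cs x) + (\<Sum>y\<in>B. ct y) + int (card {(x,y). E x y \<and> x \<in> A \<and> y \<notin> B})"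
definition NV where "NV B x = {y. E x y \<and> y \<notin> B}"
definition NA where "NA A y = {x. E x y \<and> x \<in> A}"
definition QV where "QV B x = {y\<in>{1..m}. y \<notin> B \<and> (x \<le> k \<or> y \<le> \<nu> - k)}"
definition RA where "RA A y = {x\<in>A. y \<le> \<nu> - k \<or> x \<le> k}"

lemma finE: "finite {(x,y). E x y \<and> P x y}"
  by (rule finite_subset[of _ "{1..n} \<times> {1..m}"]) (auto simp: E_def)

lemma L1:
  assumes "j \<in> {1..n}" "j \<notin> A"
  shows "F (insert j A) B = F A B - cs j + int (card (NV B j))"
proof -
  have s: "(\<Sum>x\<in>{1..n} - A. cs x) = cs j + (\<Sum>x\<in>{1..n} - insert j A. cs x)"
  proof -
    have "(\<Sum>x\<in>{1..n} - A. cs x) = cs j + (\<Sum>x\<in>({1..n} - A) - {j}. cs x)"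
      using assms by (intro sum.remove) auto
    moreover have "({1..n} - A) - {j} = {1..n} - insert j A" by auto
    ultimately show ?thesis by simp
  qed
  have u: "{(x,y). E x y \<and> x \<in> insert j A \<and> y \<notin> B} =
      {(x,y). E x y \<and> x \<in> A \<and> y \<notin> B} \<union> Pair j ` NV B j"
    by (auto simp: NV_def)
  have fN: "finite (NV B j)" by (rule finite_subset[of _ "{1..m}"]) (auto simp: NV_def E_def)
  have c: "card ({(x,y). E x y \<and> x \<in> A \<and> y \<notin> B} \<union> Pair j ` NV B j)
     = card {(x,y). E x y \<and> x \<in> A \<and> y \<notin> B} + card (Pair j ` NV B j)"
    using assms fN by (intro card_Un_disjoint finE) auto
  have ci: "card (Pair j ` NV B j) = card (NV B j)" by (intro card_image) (auto simp: inj_on_def)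
  show ?thesis unfolding F_def u c ci s by simp
qed

lemma L2:
  assumes "A \<subseteq> {1..n}" "i \<in> A"
  shows "F (A - {i}) B = F A B + cs i - int (card (NV B i))"
proof -
  have "F (insert i (A - {i})) B = F (A - {i}) B - cs i + int (card (NV B i))"
    using assms by (intro L1) auto
  moreover have "insert i (A - {i}) = A" using assms by auto
  ultimately show ?thesis by simp
qed

lemma L3:
  assumes "B \<subseteq> {1..m}" "y \<in> {1..m}" "y \<notin> B"
  shows "F A (insert y B) = F A B + ct y - int (card (NA A y))"
proof -
  have fB: "finite B" using assms finite_subset by blast
  have s: "(\<Sum>z\<in>insert y B. ct z) = ct y + (\<Sum>z\<in>B. ct z)" using fB assms by simp
  have u: "{(x,z). E x z \<and> x \<in> A \<and> z \<notin> insert y B} =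
      {(x,z). E x z \<and> x \<in> A \<and> z \<notin> B} - (\<lambda>x. (x,y)) ` NA A y"
    by (auto simp: NA_def)
  have fN: "finite (NA A y)" by (rule finite_subset[of _ "{1..n}"]) (auto simp: NA_def E_def)
  have c: "card ({(x,z). E x z \<and> x \<in> A \<and> z \<notin> B} - (\<lambda>x. (x,y)) ` NA A y)
     = card {(x,z). E x z \<and> x \<in> A \<and> z \<notin> B} - card ((\<lambda>x. (x,y)) ` NA A y)"
  proof (rule card_Diff_subset)
    show "finite ((\<lambda>x. (x,y)) ` NA A y)" using fN by simp
  qed (use assms in \<open>auto simp: NA_def\<close>)
  have sub: "card ((\<lambda>x. (x,y)) ` NA A y) \<le> card {(x,z). E x z \<and> x \<in> A \<and> z \<notin> B}"
    using assms by (intro card_mono finE) (auto simp: NA_def)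
  have ci: "card ((\<lambda>x. (x,y)) ` NA A y) = card (NA A y)" by (intro card_image) (auto simp: inj_on_def)
  show ?thesis unfolding F_def u s using c ci sub by simp
qed

lemma L4:
  assumes "B \<subseteq> {1..m}" "y \<in> B"
  shows "F A (B - {y}) = F A B - ct y + int (card (NA A y))"
proof -
  have "F A (insert y (B - {y})) = F A (B - {y}) + ct y - int (card (NA A y))"
    using assms by (intro L3) auto
  moreover have "insert y (B - {y}) = B" using assms by auto
  ultimately show ?thesis by simp
qed

lemma cardNV:
  assumes "x \<in> {1..n}"
  shows "int (card (NV B x)) = int (card (QV B x)) - (if x \<le> \<nu> \<and> \<nu> + 1 - x \<in> QV B x then 1 else 0)"
proof -
  have e: "NV B x = (if x \<le> \<nu> then QV B x - {\<nu> + 1 - x} else QV B x)"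
    using assms by (auto simp: NV_def QV_def E_def)
  have f: "finite (QV B x)" by (simp add: QV_def)
  show ?thesis
  proof (cases "x \<le> \<nu> \<and> \<nu> + 1 - x \<in> QV B x")
    case True
    then have c: "card (NV B x) = card (QV B x) - 1" using f by (simp add: e)
    have "card (QV B x) > 0" using True f card_gt_0_iff by blast
    then show ?thesis using True c by (simp add: of_nat_diff)
  next
    case False
    then have "NV B x = QV B x" using e by auto
    then show ?thesis using False by simp
  qed
qed


lemma cardNA:
  assumes "y \<in> {1..m}" "A \<subseteq> {1..n}"
  shows "int (card (NA A y)) = int (card (RA A y)) - (if y \<le> \<nu> \<and> \<nu> + 1 - y \<in> RA A y then 1 else 0)"
proof -
  have e: "NA A y = (if y \<le> \<nu> then RA A y - {\<nu> + 1 - y} else RA A y)"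
    using assms by (auto simp: NA_def RA_def E_def)
  have f: "finite (RA A y)" using assms finite_subset[of A "{1..n}"] by (simp add: RA_def)
  show ?thesis
  proof (cases "y \<le> \<nu> \<and> \<nu> + 1 - y \<in> RA A y")
    case True
    then have c: "card (NA A y) = card (RA A y) - 1" using f by (simp add: e)
    have "card (RA A y) > 0" using True f card_gt_0_iff by blast
    then show ?thesis using True c by (simp add: of_nat_diff)
  next
    case False
    then have "NA A y = RA A y" using e by auto
    then show ?thesis using False by simp
  qed
qed

lemma NV_le: "x \<in> {1..n} \<Longrightarrow> int (card (NV B x)) \<le> int (card (QV B x))"
  using cardNV[of x B] by (cases "x \<le> \<nu> \<and> \<nu> + 1 - x \<in> QV B x") simp_all
lemma NV_ge: "x \<in> {1..n} \<Longrightarrow> int (card (QV B x)) - 1 \<le> int (card (NV B x))"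
  using cardNV[of x B] by (cases "x \<le> \<nu> \<and> \<nu> + 1 - x \<in> QV B x") simp_all
lemma NA_le: "y \<in> {1..m} \<Longrightarrow> A \<subseteq> {1..n} \<Longrightarrow> int (card (NA A y)) \<le> int (card (RA A y))"
  using cardNA[of y A] by (cases "y \<le> \<nu> \<and> \<nu> + 1 - y \<in> RA A y") simp_all
lemma NA_ge: "y \<in> {1..m} \<Longrightarrow> A \<subseteq> {1..n} \<Longrightarrow> int (card (RA A y)) - 1 \<le> int (card (NA A y))"
  using cardNA[of y A] by (cases "y \<le> \<nu> \<and> \<nu> + 1 - y \<in> RA A y") simp_all

lemma QV_eq: "(i \<le> k \<longleftrightarrow> j \<le> k) \<Longrightarrow> QV B i = QV B j" by (simp add: QV_def)
lemma RA_eq: "(i \<le> \<nu> - k \<longleftrightarrow> j \<le> \<nu> - k) \<Longrightarrow> RA A i = RA A j" by (simp add: RA_def)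

definition M :: int where "M = int n + 1"
definition h :: "nat \<Rightarrow> int" where "h x = 2 * (M * int (a \<nu>) + int \<nu> - M * int (a x) - int x) + 1"
definition Phi where "Phi A B = (\<Sum>x\<in>A. h x) - (\<Sum>y\<in>B. int y)"

lemma PA_ins: "finite A \<Longrightarrow> j \<notin> A \<Longrightarrow> Phi (insert j A) B = Phi A B + h j"
  by (simp add: Phi_def)
lemma PA_rem: "finite A \<Longrightarrow> i \<in> A \<Longrightarrow> Phi (A - {i}) B = Phi A B - h i"
  by (simp add: Phi_def sum_diff1)
lemma PB_ins: "finite B \<Longrightarrow> j \<notin> B \<Longrightarrow> Phi A (insert j B) = Phi A B - int j"
  by (simp add: Phi_def)
lemma PB_rem: "finite B \<Longrightarrow> i \<in> B \<Longrightarrow> Phi A (B - {i}) = Phi A B + int i"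
  by (simp add: Phi_def sum_diff1)

definition good where "good A B \<longleftrightarrow> A \<subseteq> {1..n} \<and> B \<subseteq> {1..m} \<and>
   (\<forall>A' B'. A' \<subseteq> {1..n} \<longrightarrow> B' \<subseteq> {1..m} \<longrightarrow> F A' B' \<le> F A B \<longrightarrow> Phi A B \<le> Phi A' B')"

lemma goodD:
  assumes "good A B" "A' \<subseteq> {1..n}" "B' \<subseteq> {1..m}" "F A' B' \<le> F A B" "Phi A' B' < Phi A B"
  shows False
proof -
  from assms(1) have "\<forall>A' B'. A' \<subseteq> {1..n} \<longrightarrow> B' \<subseteq> {1..m} \<longrightarrow> F A' B' \<le> F A B \<longrightarrow> Phi A B \<le> Phi A' B'"
    by (simp add: good_def)
  then have "Phi A B \<le> Phi A' B'" using assms(2-4) by blast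
  then show False using assms(5) by simp
qed

lemma condW:
  assumes g: "good A B" and i: "i \<in> {1..m}" and j: "j \<in> {1..m}"
    and grp: "(i \<le> \<nu> - k \<longleftrightarrow> j \<le> \<nu> - k)" and iB: "i \<in> B" and jB: "j \<notin> B"
  shows "b i \<le> b j"
proof (rule ccontr)
  assume "\<not> b i \<le> b j"
  hence lt: "b j < b i" by simp
  have ij: "i < j"
  proof (rule ccontr)
    assume "\<not> i < j"
    then have "b i \<le> b j" using bmono[of j i] i j by auto
    with lt show False by simp
  qed
  from g have A: "A \<subseteq> {1..n}" and B: "B \<subseteq> {1..m}" unfolding good_def by auto
  have fB: "finite B" using B finite_subset by blast
  define B' where "B' = insert j (B - {i})"
  have B'sub: "B' \<subseteq> {1..m}" using B j by (auto simp: B'_def)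
  have F1: "F A (B - {i}) = F A B - ct i + int (card (NA A i))" using L4 B iB by blast
  have F2: "F A B' = F A (B - {i}) + ct j - int (card (NA A j))"
    unfolding B'_def using L3[of "B - {i}" j A] B jB j by auto
  have R: "RA A i = RA A j" using grp by (rule RA_eq)
  have ci: "int (card (NA A i)) \<le> int (card (RA A j))" using NA_le[OF i A] R by simp
  have cj: "int (card (RA A j)) - 1 \<le> int (card (NA A j))" using NA_ge[OF j A] .
  have ctd: "ct i - ct j = int (b i) - int (b j)" using grp by (simp add: ct_def)
  have "F A B' \<le> F A B" using F1 F2 ci cj ctd lt of_nat_less_iff[of "b j" "b i", where 'a=int] by linarith
  moreover have "Phi A B' < Phi A B"
  proof -
    have "Phi A B' = Phi A (B - {i}) - int j" unfolding B'_def using fB jB by (intro PB_ins) auto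
    also have "\<dots> = Phi A B + int i - int j" using PB_rem[OF fB iB] by simp
    finally show ?thesis using ij by simp
  qed
  ultimately show False using goodD[OF g A B'sub] by blast
qed

lemma swapV:
  assumes A: "A \<subseteq> {1..n}" and i: "i \<in> {1..n}" and j: "j \<in> {1..n}" and iA: "i \<in> A" and jA: "j \<notin> A"
  shows "F (insert j (A - {i})) B = F A B + cs i - cs j - int (card (NV B i)) + int (card (NV B j))"
    and "Phi (insert j (A - {i})) B = Phi A B - h i + h j"
proof -
  have fA: "finite A" using A finite_subset by blast
  show "F (insert j (A - {i})) B = F A B + cs i - cs j - int (card (NV B i)) + int (card (NV B j))"
    using L1[of j "A - {i}" B] L2[OF A iA, of B] j jA by auto
  show "Phi (insert j (A - {i})) B = Phi A B - h i + h j"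
    using PA_ins[of "A - {i}" j B] PA_rem[OF fA iA, of B] fA jA by auto
qed

lemma condV:
  assumes g: "good A B" and i: "i \<in> {1..n}" and j: "j \<in> {1..n}"
    and grp: "(i \<le> k \<longleftrightarrow> j \<le> k)" and iA: "i \<in> A" and jA: "j \<notin> A"
  shows "a j \<le> a i"
proof (rule ccontr)
  assume "\<not> a j \<le> a i"
  hence lt: "a i < a j" by simp
  from g have A: "A \<subseteq> {1..n}" and B: "B \<subseteq> {1..m}" unfolding good_def by auto
  define A' where "A' = insert j (A - {i})"
  have A'sub: "A' \<subseteq> {1..n}" using A j by (auto simp: A'_def)
  note sw = swapV[OF A i j iA jA, of B, folded A'_def]
  have Q: "QV B i = QV B j" using grp by (rule QV_eq)
  have c1: "int (card (QV B j)) - 1 \<le> int (card (NV B i))" using NV_ge[of i B] i Q by simp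
  have c2: "int (card (NV B j)) \<le> int (card (QV B j))" using NV_le[OF j] .
  have csd: "cs i - cs j = int (a i) - int (a j)" using grp by (simp add: cs_def)
  have "F A' B \<le> F A B" using sw(1) c1 c2 csd lt of_nat_less_iff[of "a i" "a j", where 'a=int] by linarith
  moreover have "Phi A' B < Phi A B"
  proof -
    have Mp: "M > int n" by (simp add: M_def)
    have "M * 1 \<le> M * (int (a j) - int (a i))" using lt Mp by (intro mult_left_mono) auto
    hence "M \<le> M * int (a j) - M * int (a i)" by (simp add: right_diff_distrib)
    moreover have "h j - h i = 2 * (M * int (a i) - M * int (a j) + int i - int j)"
      by (simp add: h_def algebra_simps)
    ultimately have "h j - h i < 0" using i Mp by auto
    thus ?thesis using sw(2) by simp
  qed
  ultimately show False using goodD[OF g A'sub B] by blast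
qed


lemma condTie:
  assumes g: "good A B" and i: "i \<in> {1..n}" and j: "j \<in> {1..n}"
    and grp: "(i \<le> k \<longleftrightarrow> j \<le> k)" and iA: "i \<in> A" and jA: "j \<notin> A" and eq: "a i = a j"
  shows "j < i"
proof (rule ccontr)
  assume "\<not> j < i"
  moreover have "i \<noteq> j" using iA jA by auto
  ultimately have ij: "i < j" by simp
  from g have A: "A \<subseteq> {1..n}" and B: "B \<subseteq> {1..m}" unfolding good_def by auto
  have fA: "finite A" using A finite_subset by blast
  have fB: "finite B" using B finite_subset by blast
  have Q: "QV B i = QV B j" using grp by (rule QV_eq)
  have csd: "cs i = cs j" using grp eq by (simp add: cs_def)
  note cNi = cardNV[OF i, of B] and cNj = cardNV[OF j, of B]
  have hd: "h j - h i = 2 * (int i - int j)" by (simp add: h_def eq algebra_simps)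
  show False
  proof (cases "(i \<le> \<nu> \<and> \<nu>+1-i \<in> QV B i) \<longrightarrow> (j \<le> \<nu> \<and> \<nu>+1-j \<in> QV B j)")
    case True
    define A' where "A' = insert j (A - {i})"
    have A'sub: "A' \<subseteq> {1..n}" using A j by (auto simp: A'_def)
    note sw = swapV[OF A i j iA jA, of B, folded A'_def]
    have "int (card (NV B j)) \<le> int (card (NV B i))"
      using cNi cNj True unfolding Q by (auto split: if_splits)
    hence "F A' B \<le> F A B" using sw(1) csd by linarith
    moreover have "Phi A' B < Phi A B" using sw(2) hd ij by (simp add: algebra_simps)
    ultimately show False using goodD[OF g A'sub B] by blast
  next
    case False
    hence iv: "i \<le> \<nu>" and pQ: "\<nu>+1-i \<in> QV B i" and nj: "\<not> (j \<le> \<nu> \<and> \<nu>+1-j \<in> QV B j)" by auto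
    have cNi': "int (card (NV B i)) = int (card (QV B j)) - 1" using cNi iv pQ Q by simp
    show False
    proof (cases "j \<le> \<nu>")
      case True
      define p where "p = \<nu>+1-i"
      define q where "q = \<nu>+1-j"
      have cNj': "int (card (NV B j)) = int (card (QV B j))" using cNj nj by simp
      have qnQ: "q \<notin> QV B j" using nj True q_def by auto
      have pm: "p \<in> {1..m}" and pB: "p \<notin> B" using pQ by (auto simp: QV_def p_def)
      have qm: "q \<in> {1..m}" using True num ij i by (auto simp: q_def)
      have qB: "q \<in> B" using qnQ qm True by (auto simp: QV_def q_def)
      have qp: "q < p" using ij True by (simp add: p_def q_def)
      have grpw: "(p \<le> \<nu>-k \<longleftrightarrow> q \<le> \<nu>-k)" using grp iv True ij kn by (auto simp: p_def q_def)
      define A1 where "A1 = insert j (A - {i})"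
      define B' where "B' = insert p (B - {q})"
      have A1sub: "A1 \<subseteq> {1..n}" using A j by (auto simp: A1_def)
      have B'sub: "B' \<subseteq> {1..m}" using B pm by (auto simp: B'_def)
      note sw = swapV[OF A i j iA jA, of B, folded A1_def]
      have F1: "F A1 B = F A B + 1" using sw(1) csd cNi' cNj' by simp
      have F2: "F A1 (B - {q}) = F A1 B - ct q + int (card (NA A1 q))" using L4[OF B qB] .
      have F3: "F A1 B' = F A1 (B - {q}) + ct p - int (card (NA A1 p))"
        unfolding B'_def using L3[of "B - {q}" p A1] B pm pB by auto
      have jR: "j \<in> RA A1 q" using grp True ij kn by (auto simp: RA_def A1_def q_def)
      have iR: "i \<notin> RA A1 p" using ij by (auto simp: RA_def A1_def)
      have qv: "q \<le> \<nu>" "\<nu> + 1 - q = j" using True ij i by (auto simp: q_def)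
      have pv: "\<nu> + 1 - p = i" using iv i by (auto simp: p_def)
      have R: "RA A1 p = RA A1 q" using grpw by (rule RA_eq)
      have cq: "int (card (NA A1 q)) = int (card (RA A1 q)) - 1"
        using cardNA[OF qm A1sub] qv jR by simp
      have cp: "int (card (NA A1 p)) = int (card (RA A1 q))"
        using cardNA[OF pm A1sub] pv iR R by simp
      have bpq: "b p \<le> b q" using bmono[of q p] qm pm qp by auto
      have ctd: "ct p - ct q = int (b p) - int (b q)" using grpw by (simp add: ct_def)
      have "F A1 B' \<le> F A B" using F1 F2 F3 cq cp bpq ctd of_nat_le_iff[of "b p" "b q", where 'a=int] by linarith
      moreover have "Phi A1 B' < Phi A B"
      proof -
        have fA1: "finite A1" using A1sub finite_subset by blast
        have "Phi A1 B' = Phi A1 (B - {q}) - int p" unfolding B'_def using fB pB by (intro PB_ins) auto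
        also have "\<dots> = Phi A1 B + int q - int p" using PB_rem[OF fB qB] by simp
        also have "\<dots> = Phi A B - h i + h j + int q - int p" using sw(2) by simp
        finally have e1: "Phi A1 B' = Phi A B - h i + h j + int q - int p" .
        have "int i < int j" "int q < int p" using ij qp by simp_all
        then show ?thesis using hd e1 by (smt (verit))
      qed
      ultimately show False using goodD[OF g A1sub B'sub] by blast
    next
      case False
      have ik: "\<not> i \<le> k" using grp False kn by auto
      have i1: "1 \<le> i" using i by simp
      have anu: "a \<nu> = a i" using amono[of i \<nu>] amono[of \<nu> j] i1 iv False j nun eq by auto
      have hi: "h i = 2 * (int \<nu> - int i) + 1" by (simp add: h_def anu)
      have hj: "h j = 2 * (int \<nu> - int j) + 1" by (simp add: h_def anu eq)
      have csi: "cs i = int (a i)" "cs j = int (a i)" using ik grp eq by (auto simp: cs_def)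
      have cNj': "int (card (NV B j)) = int (card (QV B j))" using cNj False by simp
      show False
      proof (cases "int (a i) + 1 \<le> int (card (QV B j))")
        case True
        have As: "A - {i} \<subseteq> {1..n}" using A by auto
        have "F (A - {i}) B \<le> F A B" using L2[OF A iA, of B] csi cNi' True by linarith
        moreover have "Phi (A - {i}) B < Phi A B" using PA_rem[OF fA iA, of B] hi iv of_nat_le_iff[of i \<nu>, where 'a=int] by (smt (verit))
        ultimately show False using goodD[OF g As B] by blast
      next
        case c2: False
        have As: "insert j A \<subseteq> {1..n}" using A j by auto
        have "F (insert j A) B \<le> F A B" using L1[OF j jA, of B] csi cNj' c2 by linarith
        moreover have "Phi (insert j A) B < Phi A B" using PA_ins[OF fA jA, of B] hj False of_nat_le_iff[of j \<nu>, where 'a=int] by (smt (verit))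
        ultimately show False using goodD[OF g As B] by blast
      qed
    qed
  qed
qed


lemma exists_good:
  "\<exists>A B. good A B \<and> (\<forall>A' B'. A' \<subseteq> {1..n} \<longrightarrow> B' \<subseteq> {1..m} \<longrightarrow> F A B \<le> F A' B')"
proof -
  define P where "P = Pow {1..n} \<times> Pow {1..m}"
  define f where "f = (\<lambda>(A,B). F A B)"
  define g where "g = (\<lambda>(A,B). Phi A B)"
  have finP: "finite P" by (simp add: P_def)
  have neP: "P \<noteq> {}" by (auto simp: P_def)
  define fmin where "fmin = Min (f ` P)"
  have fmin_le: "\<And>p. p \<in> P \<Longrightarrow> fmin \<le> f p" unfolding fmin_def using finP by simp
  have "fmin \<in> f ` P" unfolding fmin_def using finP neP by (intro Min_in) auto
  then obtain p1 where p1: "p1 \<in> P" "f p1 = fmin" by auto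
  define S where "S = {p \<in> P. f p = fmin}"
  have finS: "finite S" using finP by (simp add: S_def)
  have neS: "S \<noteq> {}" using p1 unfolding S_def by blast
  define p0 where "p0 = arg_min_on g S"
  have p0S: "p0 \<in> S" and p0m: "\<not> (\<exists>x\<in>S. g x < g p0)"
    using arg_min_if_finite[OF finS neS, of g] by (auto simp: p0_def)
  obtain A B where AB: "p0 = (A, B)" by (cases p0) simp
  have p0P: "(A, B) \<in> P" and fAB': "f (A, B) = fmin" using p0S unfolding S_def AB by simp_all
  have ABP: "A \<subseteq> {1..n}" "B \<subseteq> {1..m}" using p0P unfolding P_def by simp_all
  have fAB: "F A B = fmin" using fAB' unfolding f_def by simp
  have mn1: "F A B \<le> F A' B'" if "A' \<subseteq> {1..n}" "B' \<subseteq> {1..m}" for A' B'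
  proof -
    have "(A', B') \<in> P" using that unfolding P_def by simp
    then have "fmin \<le> f (A', B')" by (rule fmin_le)
    then show ?thesis using fAB unfolding f_def by simp
  qed
  have mn: "\<forall>A' B'. A' \<subseteq> {1..n} \<longrightarrow> B' \<subseteq> {1..m} \<longrightarrow> F A B \<le> F A' B'"
    using mn1 by blast
  have "good A B"
    unfolding good_def
  proof (intro conjI ABP allI impI)
    fix A' B' assume h: "A' \<subseteq> {1..n}" "B' \<subseteq> {1..m}" "F A' B' \<le> F A B"
    have "F A' B' = fmin" using mn1[OF h(1,2)] h(3) fAB by simp
    moreover have "(A', B') \<in> P" using h unfolding P_def by simp
    ultimately have "(A', B') \<in> S" unfolding S_def f_def by simp
    then have "\<not> g (A', B') < g p0" using p0m by blast
    then show "Phi A B \<le> Phi A' B'" unfolding AB g_def by simp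
  qed
  with mn show ?thesis by blast
qed

lemma cut_sub:
  assumes "is_st_cut n m X"
  shows "{x. Vv x \<in> X} \<subseteq> {1..n}" "{y. Ww y \<in> X} \<subseteq> {1..m}"
  using assms by (auto simp: is_st_cut_def net_vertices_def)

lemma cap_eq:
  assumes cut: "is_st_cut n m X"
  shows "cut_capacity n m a b \<nu> k X = F {x. Vv x \<in> X} {y. Ww y \<in> X}"
proof -
  define A where "A = {x. Vv x \<in> X}"
  define B where "B = {y. Ww y \<in> X}"
  have As: "A \<subseteq> {1..n}" and Bs: "B \<subseteq> {1..m}" using cut_sub[OF cut] by (auto simp: A_def B_def)
  have fB: "finite B" using Bs finite_subset by blast
  define C where "C = {(x,y). E x y \<and> x \<in> A \<and> y \<notin> B}"
  define S1 where "S1 = (\<lambda>i. (Src, Vv i)) ` ({1..n} - A)"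
  define S2 where "S2 = (\<lambda>j. (Ww j, Snk)) ` B"
  define S3 where "S3 = (\<lambda>(i,j). (Vv i, Ww j)) ` C"
  have sX: "Src \<in> X" "Snk \<notin> X" using cut by (auto simp: is_st_cut_def)
  have seteq: "{e \<in> net_arcs n m \<nu> k. fst e \<in> X \<and> snd e \<notin> X} = S1 \<union> S2 \<union> S3"
    using sX Bs by (auto simp: net_arcs_def E_def S1_def S2_def S3_def C_def A_def B_def)
  have fC: "finite C" unfolding C_def by (rule finE)
  have f1: "finite S1" "finite S2" "finite S3" using fB fC by (auto simp: S1_def S2_def S3_def)
  have d: "(S1 \<union> S2) \<inter> S3 = {}" "S1 \<inter> S2 = {}" by (auto simp: S1_def S2_def S3_def)
  let ?c = "net_cap a b \<nu> k"
  have "cut_capacity n m a b \<nu> k X = sum ?c S1 + sum ?c S2 + sum ?c S3"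
    unfolding cut_capacity_def seteq using f1 d by (simp add: sum.union_disjoint)
  moreover have "sum ?c S1 = (\<Sum>x\<in>{1..n} - A. cs x)"
    unfolding S1_def by (subst sum.reindex) (auto simp: inj_on_def net_cap_def cs_def)
  moreover have "sum ?c S2 = (\<Sum>y\<in>B. ct y)"
    unfolding S2_def by (subst sum.reindex) (auto simp: inj_on_def net_cap_def ct_def)
  moreover have "sum ?c S3 = int (card C)"
  proof -
    have "sum ?c S3 = sum (\<lambda>_. 1) S3" unfolding S3_def by (intro sum.cong) (auto simp: net_cap_def)
    also have "\<dots> = int (card S3)" by simp
    also have "card S3 = card C" unfolding S3_def by (intro card_image) (auto simp: inj_on_def)
    finally show ?thesis .
  qed
  ultimately show ?thesis by (simp add: F_def C_def A_def B_def)
qed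

end

theorem lemma3:
  fixes n m \<nu> k :: nat and a b :: "nat \<Rightarrow> nat"
  assumes "n \<ge> 1" and "m \<ge> 1"
    and "\<And>i j. 1 \<le> i \<Longrightarrow> i \<le> j \<Longrightarrow> j \<le> n \<Longrightarrow> a j \<le> a i"
    and "\<And>i j. 1 \<le> i \<Longrightarrow> i \<le> j \<Longrightarrow> j \<le> m \<Longrightarrow> b j \<le> b i"
    and "k \<le> \<nu>" and "\<nu> \<le> min n m"
  shows "\<exists>X. is_min_cut n m a b \<nu> k X \<and> is_clean n m a b \<nu> k X"
proof -
  interpret NWK n m \<nu> k a b using assms by unfold_locales auto
  obtain A B where g: "good A B" and mn: "\<forall>A' B'. A' \<subseteq> {1..n} \<longrightarrow> B' \<subseteq> {1..m} \<longrightarrow> F A B \<le> F A' B'"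
    using exists_good by blast
  have As: "A \<subseteq> {1..n}" and Bs: "B \<subseteq> {1..m}" using g by (auto simp: good_def)
  define X where "X = insert Src (Vv ` A \<union> Ww ` B)"
  have AX: "{x. Vv x \<in> X} = A" and BX: "{y. Ww y \<in> X} = B" by (auto simp: X_def)
  have memV: "\<And>x. Vv x \<in> X \<longleftrightarrow> x \<in> A" and memW: "\<And>y. Ww y \<in> X \<longleftrightarrow> y \<in> B" by (auto simp: X_def)
  have cut: "is_st_cut n m X" using As Bs by (auto simp: is_st_cut_def X_def net_vertices_def)
  have "is_min_cut n m a b \<nu> k X"
    unfolding is_min_cut_def
  proof (intro conjI cut allI impI)
    fix Y assume Y: "is_st_cut n m Y"
    show "cut_capacity n m a b \<nu> k X \<le> cut_capacity n m a b \<nu> k Y"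
      unfolding cap_eq[OF cut] cap_eq[OF Y] AX BX using mn cut_sub[OF Y] by blast
  qed
  moreover have "is_clean n m a b \<nu> k X"
  proof -
    have c1: "\<forall>i \<in> {1..k}. \<forall>j \<in> {1..k}. i \<in> A \<and> j \<notin> A \<longrightarrow> a i \<ge> a j"
    proof (intro ballI impI)
      fix i j assume h1: "i \<in> {1..k}" and h2: "j \<in> {1..k}" and h: "i \<in> A \<and> j \<notin> A"
      have h3: "i \<in> A" and h4: "j \<notin> A" using h by auto
      
      have ii: "i \<in> {1..n}" using h1 kn nun by auto
      have jj: "j \<in> {1..n}" using h2 kn nun by auto
      have gr: "i \<le> k \<longleftrightarrow> j \<le> k" using h1 h2 by auto
      show "a i \<ge> a j" using condV[OF g ii jj gr h3 h4] by simp
    qed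
    have c2: "\<forall>i \<in> {1..\<nu>-k}. \<forall>j \<in> {1..\<nu>-k}. i \<in> B \<and> j \<notin> B \<longrightarrow> b i \<le> b j"
    proof (intro ballI impI)
      fix i j assume h1: "i \<in> {1..\<nu>-k}" and h2: "j \<in> {1..\<nu>-k}" and h: "i \<in> B \<and> j \<notin> B"
      have h3: "i \<in> B" and h4: "j \<notin> B" using h by auto
      
      have ii: "i \<in> {1..m}" using h1 num by auto
      have jj: "j \<in> {1..m}" using h2 num by auto
      have gr: "i \<le> \<nu> - k \<longleftrightarrow> j \<le> \<nu> - k" using h1 h2 by auto
      show "b i \<le> b j" using condW[OF g ii jj gr h3 h4] by simp
    qed
    have c3: "\<forall>i \<in> {k+1..n}. \<forall>j \<in> {k+1..n}. i \<in> A \<and> j \<notin> A \<longrightarrow> a i \<ge> a j"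
    proof (intro ballI impI)
      fix i j assume h1: "i \<in> {k+1..n}" and h2: "j \<in> {k+1..n}" and h: "i \<in> A \<and> j \<notin> A"
      have h3: "i \<in> A" and h4: "j \<notin> A" using h by auto
      
      have ii: "i \<in> {1..n}" using h1 kn by auto
      have jj: "j \<in> {1..n}" using h2 kn by auto
      have gr: "i \<le> k \<longleftrightarrow> j \<le> k" using h1 h2 by auto
      show "a i \<ge> a j" using condV[OF g ii jj gr h3 h4] by simp
    qed
    have c4: "\<forall>i \<in> {\<nu>-k+1..m}. \<forall>j \<in> {\<nu>-k+1..m}. i \<in> B \<and> j \<notin> B \<longrightarrow> b i \<le> b j"
    proof (intro ballI impI)
      fix i j assume h1: "i \<in> {\<nu>-k+1..m}" and h2: "j \<in> {\<nu>-k+1..m}" and h: "i \<in> B \<and> j \<notin> B"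
      have h3: "i \<in> B" and h4: "j \<notin> B" using h by auto
      
      have ii: "i \<in> {1..m}" using h1 num by auto
      have jj: "j \<in> {1..m}" using h2 num by auto
      have gr: "i \<le> \<nu> - k \<longleftrightarrow> j \<le> \<nu> - k" using h1 h2 by auto
      show "b i \<le> b j" using condW[OF g ii jj gr h3 h4] by simp
    qed
    have c5: "\<forall>i \<in> {1..k}. \<forall>j \<in> {1..k}. i \<in> A \<and> j \<notin> A \<and> a i = a j \<longrightarrow> i > j"
    proof (intro ballI impI)
      fix i j assume h1: "i \<in> {1..k}" and h2: "j \<in> {1..k}" and h: "i \<in> A \<and> j \<notin> A \<and> a i = a j"
      have h3: "i \<in> A" and h4: "j \<notin> A" using h by auto
      have h5: "a i = a j" using h by auto
      have ii: "i \<in> {1..n}" using h1 kn nun by auto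
      have jj: "j \<in> {1..n}" using h2 kn nun by auto
      have gr: "i \<le> k \<longleftrightarrow> j \<le> k" using h1 h2 by auto
      show "i > j" using condTie[OF g ii jj gr h3 h4 h5] by simp
    qed
    have c6: "\<forall>i \<in> {k+1..n}. \<forall>j \<in> {k+1..n}. i \<in> A \<and> j \<notin> A \<and> a i = a j \<longrightarrow> i > j"
    proof (intro ballI impI)
      fix i j assume h1: "i \<in> {k+1..n}" and h2: "j \<in> {k+1..n}" and h: "i \<in> A \<and> j \<notin> A \<and> a i = a j"
      have h3: "i \<in> A" and h4: "j \<notin> A" using h by auto
      have h5: "a i = a j" using h by auto
      have ii: "i \<in> {1..n}" using h1 kn by auto
      have jj: "j \<in> {1..n}" using h2 kn by auto
      have gr: "i \<le> k \<longleftrightarrow> j \<le> k" using h1 h2 by auto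
      show "i > j" using condTie[OF g ii jj gr h3 h4 h5] by simp
    qed
    show ?thesis unfolding is_clean_def memV memW using c1 c2 c3 c4 c5 c6 by blast
  qed
  ultimately show ?thesis by blast
qed

end
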